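(* For $n\in\mathbb{Z}$ let $f^{(n)}(x)=x^{2^n}$ on $[0,1]$ and $u^{(n)}=2^{-2^n}$, so that $]0,1[=\bigcup_{n\in\mathbb{Z}}\,]u^{(n+1)},u^{(n)}]$ (disjoint union). Define $U_1:[0,1]^2\to[0,1]$ by $U_1(x,y)=1$ if $\max(x,y)=1$; $U_1(x,y)=0$ if $\min(x,y)=0$ and $\max(x,y)<1$; and $$U_1(x,y)=f^{(n+m)}\big(\min(f^{(-n)}(x),f^{(-m)}(y))\big)\quad\text{if }x\in\,]u^{(n+1)},u^{(n)}],\ y\in\,]u^{(m+1)},u^{(m)}],\ n,m\in\mathbb{Z}.$$ Then: (a) $U_1$ is a disjunctive uninorm with neutral element $1/2$; (b) for each $n\in\mathbb{Z}$, $U_1(u^{(n)},y)=f^{(n)}(y)$ for all $y\in[0,1]$, so each such cut is continuous, strictly increasing with range $[0,1]$; (c) $U_1$ does not have continuous underlying functions; (d) with $N_1(0)=1$, $N_1(1)=0$, $N_1(x)=2^{-2^{-\log_2(-\log_2 x)}}$ for $x\in\,]0,1[$, and $N_2(x)=(N_1(x))^2$, both $N_1,N_2$ are continuous strictly decreasing fuzzy negations; the function $U_2(x,y)=U_1(2^{-1/2},U_1(x,y))$ is a disjunctive uninorm with neutral element $1/4$; and $U_2(N_2(x),y)=U_1(N_1(x),y)$ for all $x,y\in[0,1]$.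
   Context: A fuzzy negation is a non-increasing map $N:[0,1]\to[0,1]$ with $N(0)=1$, $N(1)=0$. A uninorm is a map $U:[0,1]^2\to[0,1]$ that is commutative, associative, non-decreasing in each variable, and has a neutral element $e\in[0,1]$; it is disjunctive if $U(1,0)=1$. For a uninorm with neutral element $e\in\,]0,1[$, the underlying t-norm is $T_U(x,y)=U(ex,ey)/e$ and the underlying t-conorm is $S_U(x,y)=(U(e+(1-e)x,e+(1-e)y)-e)/(1-e)$; $U$ has continuous underlying functions if both are continuous. *)

theory Defs
  imports "HOL-Analysis.Analysis"
begin

definition uninorm :: "(real \<Rightarrow> real \<Rightarrow> real) \<Rightarrow> real \<Rightarrow> bool" where
  "uninorm U e \<longleftrightarrow>
     (\<forall>x\<in>{0..1}. \<forall>y\<in>{0..1}. U x y \<in> {0..1}) \<and>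
     (\<forall>x\<in>{0..1}. \<forall>y\<in>{0..1}. U x y = U y x) \<and>
     (\<forall>x\<in>{0..1}. \<forall>y\<in>{0..1}. \<forall>z\<in>{0..1}. U x (U y z) = U (U x y) z) \<and>
     (\<forall>x\<in>{0..1}. \<forall>x'\<in>{0..1}. \<forall>y\<in>{0..1}. \<forall>y'\<in>{0..1}.
         x \<le> x' \<longrightarrow> y \<le> y' \<longrightarrow> U x y \<le> U x' y') \<and>
     e \<in> {0..1} \<and> (\<forall>x\<in>{0..1}. U e x = x)"

definition disjunctive :: "(real \<Rightarrow> real \<Rightarrow> real) \<Rightarrow> bool" where
  "disjunctive U \<longleftrightarrow> U 1 0 = 1"

definition underlying_tnorm :: "(real \<Rightarrow> real \<Rightarrow> real) \<Rightarrow> real \<Rightarrow> real \<Rightarrow> real \<Rightarrow> real" where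
  "underlying_tnorm U e x y = U (e * x) (e * y) / e"

definition underlying_tconorm :: "(real \<Rightarrow> real \<Rightarrow> real) \<Rightarrow> real \<Rightarrow> real \<Rightarrow> real \<Rightarrow> real" where
  "underlying_tconorm U e x y = (U (e + (1 - e) * x) (e + (1 - e) * y) - e) / (1 - e)"

definition continuous_underlying :: "(real \<Rightarrow> real \<Rightarrow> real) \<Rightarrow> real \<Rightarrow> bool" where
  "continuous_underlying U e \<longleftrightarrow>
     continuous_on ({0..1} \<times> {0..1}) (\<lambda>(x, y). underlying_tnorm U e x y) \<and>
     continuous_on ({0..1} \<times> {0..1}) (\<lambda>(x, y). underlying_tconorm U e x y)"

definition fuzzy_negation :: "(real \<Rightarrow> real) \<Rightarrow> bool" where
  "fuzzy_negation N \<longleftrightarrow> (\<forall>x\<in>{0..1}. N x \<in> {0..1}) \<and>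
     (\<forall>x\<in>{0..1}. \<forall>y\<in>{0..1}. x \<le> y \<longrightarrow> N y \<le> N x) \<and> N 0 = 1 \<and> N 1 = 0"

definition fpow :: "int \<Rightarrow> real \<Rightarrow> real" where
  "fpow n x = x powr (2 powr real_of_int n)"

definition uu :: "int \<Rightarrow> real" where
  "uu n = 2 powr (- (2 powr real_of_int n))"

definition idx :: "real \<Rightarrow> int" where
  "idx x = (THE n. uu (n + 1) < x \<and> x \<le> uu n)"

definition U1 :: "real \<Rightarrow> real \<Rightarrow> real" where
  "U1 x y = (if max x y = 1 then 1
             else if min x y = 0 then 0
             else fpow (idx x + idx y) (min (fpow (- idx x) x) (fpow (- idx y) y)))"

definition N1 :: "real \<Rightarrow> real" where
  "N1 x = (if x = 0 then 1 else if x = 1 then 0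
           else 2 powr (- (2 powr (- log 2 (- log 2 x)))))"

definition N2 :: "real \<Rightarrow> real" where
  "N2 x = (N1 x)^2"

definition U2 :: "real \<Rightarrow> real \<Rightarrow> real" where
  "U2 x y = U1 (2 powr (-1/2)) (U1 x y)"

end

theory Submission
  imports Defs "HOL-Real_Asymp.Real_Asymp"
begin


definition psi :: "real \<Rightarrow> real" where "psi t = 2 powr (-(2 powr t))"
definition phi :: "real \<Rightarrow> real" where "phi x = log 2 (- log 2 x)"
definition G :: "real \<Rightarrow> real \<Rightarrow> real" where
  "G s t = real_of_int (floor s + floor t) + max (frac s) (frac t)"

lemma psi_pos: "0 < psi t" by (simp add: psi_def)
lemma psi_lt1: "psi t < 1"
proof -
  have "2 powr (-(2 powr t)) < 2 powr (0::real)" by (rule powr_less_mono) auto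
  thus ?thesis by (simp add: psi_def)
qed
lemma psi_less_iff: "psi s < psi t \<longleftrightarrow> t < s" by (simp add: psi_def)
lemma psi_le_iff: "psi s \<le> psi t \<longleftrightarrow> t \<le> s" by (simp add: psi_def)
lemma psi_eq_iff: "psi s = psi t \<longleftrightarrow> t = s"
  by (metis order.eq_iff psi_le_iff)
lemma psi_phi: "0 < x \<Longrightarrow> x < 1 \<Longrightarrow> psi (phi x) = x"
proof -
  assume a: "0 < x" "x < 1"
  have "log 2 x < 0" using a by simp
  hence "2 powr (log 2 (- log 2 x)) = - log 2 x" by simp
  thus ?thesis using a by (simp add: psi_def phi_def)
qed
lemma phi_psi: "phi (psi t) = t"
  by (simp add: psi_def phi_def)
lemma uu_psi: "uu n = psi (real_of_int n)" by (simp add: uu_def psi_def)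

lemma fpow_psi: "fpow k (psi t) = psi (t + real_of_int k)"
  by (simp add: fpow_def psi_def powr_powr powr_add)

lemma min_psi: "min (psi a) (psi b) = psi (max a b)"
  by (simp add: min_def max_def psi_le_iff)

lemma idx_psi: "idx (psi t) = floor t"
proof -
  have "uu (n + 1) < psi t \<and> psi t \<le> uu n \<longleftrightarrow> n = floor t" for n
    by (simp add: uu_psi psi_less_iff psi_le_iff floor_eq_iff) linarith
  thus ?thesis unfolding idx_def by simp
qed

lemma U1_psi: "U1 (psi s) (psi t) = psi (G s t)"
proof -
  have ne: "max (psi s) (psi t) \<noteq> 1" "min (psi s) (psi t) \<noteq> 0"
    using psi_lt1[of s] psi_lt1[of t] psi_pos[of s] psi_pos[of t] by (auto simp: max_def min_def)
  show ?thesis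
    unfolding U1_def using ne
    by (simp add: idx_psi fpow_psi min_psi G_def frac_def algebra_simps)
qed

lemma U1_int: "0 < x \<Longrightarrow> x < 1 \<Longrightarrow> 0 < y \<Longrightarrow> y < 1 \<Longrightarrow> U1 x y = psi (G (phi x) (phi y))"
  using U1_psi[of "phi x" "phi y"] psi_phi by simp

lemma floor_G: "floor (G s t) = floor s + floor t"
  unfolding G_def by (rule floor_unique) (auto simp: frac_lt_1 max_def)
lemma frac_G: "frac (G s t) = max (frac s) (frac t)"
  using floor_G[of s t] by (simp add: frac_def G_def)
lemma G_comm: "G s t = G t s" by (simp add: G_def max.commute add.commute)
lemma G_assoc: "G r (G s t) = G (G r s) t"
  by (simp add: G_def[of r "G s t"] G_def[of "G r s" t] floor_G frac_G max.assoc)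
lemma G_zero: "G 0 t = t" by (simp add: G_def frac_def max_def frac_ge_0)
lemma G_mono: "s \<le> s' \<Longrightarrow> G s t \<le> G s' t"
proof -
  assume a: "s \<le> s'"
  show ?thesis
  proof (cases "floor s = floor s'")
    case True
    then have "frac s \<le> frac s'" using a by (simp add: frac_def)
    thus ?thesis using True by (simp add: G_def max_def)
  next
    case False
    then have "floor s + 1 \<le> floor s'" using a by (metis floor_mono order.not_eq_order_implies_strict zless_imp_add1_zle)
    moreover have "max (frac s) (frac t) < 1" using frac_lt_1[of s] frac_lt_1[of t] by simp
    moreover have "0 \<le> max (frac s') (frac t)" using frac_ge_0 by (simp add: le_max_iff_disj)
    ultimately show ?thesis unfolding G_def by (smt (verit) of_int_add of_int_le_iff of_int_1)
  qed
qed


lemma int_psi: "0 < x \<Longrightarrow> x < 1 \<Longrightarrow> \<exists>t. x = psi t"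
  using psi_phi by metis

lemma unit_cases: "x \<in> {0..1::real} \<Longrightarrow> (x = 0 \<Longrightarrow> P) \<Longrightarrow> (x = 1 \<Longrightarrow> P) \<Longrightarrow> (\<And>t. x = psi t \<Longrightarrow> P) \<Longrightarrow> P"
  by (metis atLeastAtMost_iff int_psi order_le_less)

lemma U1_comm: "U1 x y = U1 y x"
  by (simp add: U1_def max.commute min.commute add.commute)

lemma U1_one_l: "y \<le> 1 \<Longrightarrow> U1 1 y = 1" by (simp add: U1_def)
lemma U1_one_r: "y \<le> 1 \<Longrightarrow> U1 y 1 = 1" by (simp add: U1_def)
lemma U1_zero_l: "0 \<le> y \<Longrightarrow> y < 1 \<Longrightarrow> U1 0 y = 0" by (simp add: U1_def)
lemma U1_zero_r: "0 \<le> y \<Longrightarrow> y < 1 \<Longrightarrow> U1 y 0 = 0" by (simp add: U1_def)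

lemma U1_range: "x \<in> {0..1} \<Longrightarrow> y \<in> {0..1} \<Longrightarrow> U1 x y \<in> {0..1}"
  apply (erule unit_cases[of x]; erule unit_cases[of y])
  using psi_pos psi_lt1 by (auto simp: U1_one_l U1_one_r U1_zero_l U1_zero_r U1_psi less_imp_le)

lemma U1_lt1: "x \<in> {0..<1} \<Longrightarrow> y \<in> {0..<1} \<Longrightarrow> U1 x y < 1"
proof -
  assume a: "x \<in> {0..<1}" "y \<in> {0..<1}"
  show ?thesis
  proof (cases "x = 0 \<or> y = 0")
    case True thus ?thesis using a by (auto simp: U1_zero_l U1_zero_r)
  next
    case False
    then obtain p q where "x = psi p" "y = psi q" using a by (metis atLeastLessThan_iff int_psi order_le_less)
    thus ?thesis by (simp add: U1_psi psi_lt1)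
  qed
qed

lemma U1_assoc: "x \<in> {0..1} \<Longrightarrow> y \<in> {0..1} \<Longrightarrow> z \<in> {0..1} \<Longrightarrow> U1 x (U1 y z) = U1 (U1 x y) z"
proof -
  assume a: "x \<in> {0..1}" "y \<in> {0..1}" "z \<in> {0..1}"
  have r1: "U1 y z \<in> {0..1}" "U1 x y \<in> {0..1}" using a U1_range by auto
  show ?thesis
  proof (cases "x = 1 \<or> y = 1 \<or> z = 1")
    case True
    then show ?thesis using a r1 by (auto simp: U1_one_l U1_one_r)
  next
    case F1: False
    hence lt: "x < 1" "y < 1" "z < 1" using a by auto
    have l2: "U1 y z < 1" "U1 x y < 1" using lt a by (auto intro!: U1_lt1)
    show ?thesis
    proof (cases "x = 0 \<or> y = 0 \<or> z = 0")
      case True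
      then show ?thesis using a r1 lt l2 by (auto simp: U1_zero_l U1_zero_r)
    next
      case False
      hence "0 < x" "x < 1" "0 < y" "y < 1" "0 < z" "z < 1" using a F1 by auto
      then obtain p q r where "x = psi p" "y = psi q" "z = psi r"
        using int_psi by metis
      thus ?thesis by (simp add: U1_psi G_assoc)
    qed
  qed
qed

lemma U1_mono: "x \<in> {0..1} \<Longrightarrow> y \<in> {0..1} \<Longrightarrow> x' \<in> {0..1} \<Longrightarrow> y' \<in> {0..1} \<Longrightarrow>
   x \<le> x' \<Longrightarrow> y \<le> y' \<Longrightarrow> U1 x y \<le> U1 x' y'"
proof -
  assume a: "x \<in> {0..1}" "y \<in> {0..1}" "x' \<in> {0..1}" "y' \<in> {0..1}" "x \<le> x'" "y \<le> y'"
  have r: "U1 x y \<in> {0..1}" "U1 x' y' \<in> {0..1}" using a U1_range by auto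
  show ?thesis
  proof (cases "x' = 1 \<or> y' = 1")
    case True
    then show ?thesis using a r by (auto simp: U1_one_l U1_one_r)
  next
    case F1: False
    show ?thesis
    proof (cases "x = 0 \<or> y = 0")
      case True
      then show ?thesis using a r F1 by (auto simp: U1_zero_l U1_zero_r)
    next
      case False
      hence "0 < x" "x < 1" "0 < y" "y < 1" using a F1 by auto
      then obtain p q where pq: "x = psi p" "y = psi q" using int_psi by metis
      have "x' \<noteq> 0" "y' \<noteq> 0" using False a psi_pos pq by auto
      hence "0 < x'" "x' < 1" "0 < y'" "y' < 1" using a F1 by auto
      then obtain p' q' where pq': "x' = psi p'" "y' = psi q'" using int_psi by metis
      have "p' \<le> p" "q' \<le> q" using a pq pq' psi_le_iff by auto
      hence "G p' q' \<le> G p q"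
        by (metis G_comm G_mono order.trans)
      thus ?thesis using pq pq' by (simp add: U1_psi psi_le_iff)
    qed
  qed
qed

lemma half_psi: "psi 0 = 1/2" by (simp add: psi_def powr_minus)

lemma U1_neutral: "x \<in> {0..1} \<Longrightarrow> U1 (1/2) x = x"
  apply (erule unit_cases[of x])
    apply (simp add: U1_def)
   apply (simp add: U1_def)
  by (simp add: U1_psi G_zero flip: half_psi)

lemma U1_uninorm: "uninorm U1 (1/2)"
  unfolding uninorm_def
  apply (intro conjI ballI impI)
  using U1_range apply blast
  using U1_comm apply blast
  using U1_assoc apply blast
  using U1_mono apply blast
  apply simp
  using U1_neutral by blast

lemma G_int: "G (real_of_int n) t = real_of_int n + t"
  by (simp add: G_def frac_def)

lemma U1_uu: "y \<in> {0..1} \<Longrightarrow> U1 (uu n) y = fpow n y"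
  apply (erule unit_cases[of y])
    apply (simp add: uu_psi U1_zero_r[OF less_imp_le[OF psi_pos] psi_lt1] fpow_def)
   apply (simp add: uu_psi U1_one_r[OF less_imp_le[OF psi_lt1]] fpow_def)
  by (simp add: uu_psi U1_psi G_int fpow_psi add.commute)


lemma fpow_cont: "continuous_on {0..1} (fpow n)"
  unfolding fpow_def
  by (intro continuous_on_powr' continuous_intros) auto

lemma fpow_smono: "strict_mono_on {0..1} (fpow n)"
  unfolding strict_mono_on_def fpow_def
  by (auto intro!: powr_less_mono2)

lemma fpow_image: "fpow n ` {0..1} = {0..1}"
proof
  show "fpow n ` {0..1} \<subseteq> {0..1}"
    unfolding fpow_def by (auto intro!: powr_le1)
next
  show "{0..1} \<subseteq> fpow n ` {0..1}"
  proof
    fix z :: real assume z: "z \<in> {0..1}"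
    let ?c = "2 powr real_of_int n"
    have c: "?c > 0" by simp
    have "fpow n (z powr (1/?c)) = z" unfolding fpow_def using z c by (simp add: powr_powr)
    moreover have "z powr (1/?c) \<in> {0..1}" using z c by (auto intro!: powr_le1)
    ultimately show "z \<in> fpow n ` {0..1}" by (metis image_eqI)
  qed
qed


lemma psi_1: "psi 1 = 1/4" by (simp add: psi_def powr_minus)

lemma idx_eq: "psi (real_of_int n + 1) < x \<Longrightarrow> x \<le> psi (real_of_int n) \<Longrightarrow> idx x = n"
proof -
  assume a: "psi (real_of_int n + 1) < x" "x \<le> psi (real_of_int n)"
  then have "0 < x" "x < 1" using psi_pos[of "real_of_int n+1"] psi_lt1[of n] by linarith+
  then obtain t where t: "x = psi t" using int_psi by metis
  have "real_of_int n \<le> t" "t < real_of_int n + 1" using a t psi_le_iff psi_less_iff by auto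
  then show ?thesis using t idx_psi by (simp add: floor_eq_iff)
qed

lemma fpow0: "0 \<le> x \<Longrightarrow> fpow 0 x = x" by (simp add: fpow_def powr_one)

lemma U1_a: "U1 (1/4) (1/3) = 1/9"
proof -
  have i1: "idx (1/4) = 1" using idx_psi[of 1] psi_1 by simp
  have i0: "idx (1/3) = 0" by (rule idx_eq) (simp_all add: psi_1 half_psi)
  have f: "fpow (-1) (1/4) = 1/2" using fpow_psi[of "-1" 1] psi_1 half_psi by simp
  have f1: "fpow 1 (1/3) = 1/9" by (simp add: fpow_def powr_numeral power2_eq_square)
  show ?thesis unfolding U1_def using i1 i0 f f1 by (simp add: fpow0)
qed

lemma U1_b: "1/4 < a \<Longrightarrow> a \<le> 1/3 \<Longrightarrow> U1 a (1/3) = a"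
proof -
  assume a: "1/4 < a" "a \<le> 1/3"
  have i1: "idx a = 0" by (rule idx_eq) (use a in \<open>simp_all add: psi_1 half_psi\<close>)
  have i0: "idx (1/3) = 0" by (rule idx_eq) (simp_all add: psi_1 half_psi)
  show ?thesis unfolding U1_def using i1 i0 a by (simp add: fpow0 min_def)
qed

lemma not_cont: "\<not> continuous_underlying U1 (1/2)"
proof
  assume "continuous_underlying U1 (1/2)"
  then have c: "continuous_on ({0..1} \<times> {0..1}) (\<lambda>(x, y). underlying_tnorm U1 (1/2) x y)"
    unfolding continuous_underlying_def by simp
  let ?F = "\<lambda>(x, y). underlying_tnorm U1 (1/2) x y"
  have p: "(1/2, 2/3) \<in> {0..1::real} \<times> {0..1::real}" by simp
  have "continuous (at (1/2, 2/3) within ({0..1} \<times> {0..1})) ?F"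
    using c p continuous_on_eq_continuous_within by blast
  then obtain d where d: "d > 0" and
    H: "\<forall>x'\<in>{0..1} \<times> {0..1}. dist x' (1/2, 2/3) < d \<longrightarrow> dist (?F x') (?F (1/2, 2/3)) < 1/4"
    unfolding continuous_within_eps_delta by (metis divide_pos_pos zero_less_numeral zero_less_one)
  define m where "m = min (d/2) (1/6)"
  have m: "0 < m" "m < d" "m \<le> 1/6" using d by (auto simp: m_def)
  have F0: "?F (1/2, 2/3) = 2/9" using U1_a by (simp add: underlying_tnorm_def)
  have F1: "?F (1/2 + m, 2/3) = 1/2 + m"
  proof -
    have "U1 (1/2 * (1/2 + m)) (1/2 * (2/3)) = 1/2 * (1/2 + m)"
      using U1_b[of "1/2 * (1/2 + m)"] m by simp
    thus ?thesis by (simp add: underlying_tnorm_def)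
  qed
  have "(1/2 + m, 2/3) \<in> {0..1::real} \<times> {0..1::real}" using m by simp
  moreover have "dist (1/2 + m, 2/3) (1/2::real, 2/3::real) < d"
    using m by (simp add: dist_Pair_Pair dist_real_def)
  ultimately have "dist (?F (1/2 + m, 2/3)) (?F (1/2, 2/3)) < 1/4" using H by blast
  then show False using F0 F1 m by (simp add: dist_real_def)
qed


lemma N1_int: "0 < x \<Longrightarrow> x < 1 \<Longrightarrow> N1 x = psi (- phi x)"
  by (simp add: N1_def psi_def phi_def)

lemma N1_range: "x \<in> {0..1} \<Longrightarrow> N1 x \<in> {0..1}"
  using psi_pos psi_lt1 by (cases "x = 0 \<or> x = 1") (auto simp: N1_int less_imp_le N1_def[of 0] N1_def[of 1])

lemma N1_0: "N1 0 = 1" and N1_1: "N1 1 = 0" by (simp_all add: N1_def)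

lemma N1_strict: "x \<in> {0..1} \<Longrightarrow> y \<in> {0..1} \<Longrightarrow> x < y \<Longrightarrow> N1 y < N1 x"
proof -
  assume a: "x \<in> {0..1}" "y \<in> {0..1}" "x < y"
  show ?thesis
  proof (cases "x = 0")
    case True
    then show ?thesis using a psi_lt1 by (cases "y = 1") (auto simp: N1_0 N1_1 N1_int)
  next
    case x0: False
    show ?thesis
    proof (cases "y = 1")
      case True
      then show ?thesis using a x0 psi_pos by (auto simp: N1_1 N1_int)
    next
      case False
      then have "0 < x" "x < 1" "0 < y" "y < 1" using a x0 by auto
      then obtain p q where pq: "x = psi p" "y = psi q" using int_psi by metis
      then have "q < p" using a psi_less_iff by auto
      then show ?thesis using pq psi_pos psi_lt1 by (simp add: N1_int phi_psi psi_less_iff)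
    qed
  qed
qed

lemma N1_fuzzy: "fuzzy_negation N1"
  unfolding fuzzy_negation_def using N1_range N1_strict N1_0 N1_1
  by (metis order_le_less)

definition E :: "real \<Rightarrow> real" where "E x = 2 powr (- (2 powr (- log 2 (- log 2 x))))"

lemma E_lim0: "(E \<longlongrightarrow> 1) (at_right 0)"
  unfolding E_def by real_asymp

lemma E_lim1: "(E \<longlongrightarrow> 0) (at_left 1)"
  unfolding E_def by real_asymp


lemma E_cont: "continuous_on {0<..<1} E"
proof -
  have h: "\<And>x. 0 < x \<Longrightarrow> x < 1 \<Longrightarrow> log 2 x < (0::real)" by simp
  show ?thesis unfolding E_def by (intro continuous_intros; use h in fastforce)
qed

lemma N1_E: "x \<in> {0<..<1} \<Longrightarrow> N1 x = E x" by (simp add: N1_def E_def)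

lemma N1_cont: "continuous_on {0..1} N1"
  unfolding continuous_on_eq_continuous_within
proof
  fix x :: real assume x: "x \<in> {0..1}"
  show "continuous (at x within {0..1}) N1"
  proof (cases "x = 0")
    case True
    have ev: "eventually (\<lambda>y. E y = N1 y) (at_right 0)"
      by (rule eventually_at_rightI[of 0 1]) (auto simp: N1_E)
    have "(N1 \<longlongrightarrow> N1 0) (at_right 0)"
      using tendsto_cong[OF ev] E_lim0 by (simp add: N1_0)
    moreover have "at (0::real) within {0..1} = at_right 0" by (rule at_within_Icc_at_right) simp
    ultimately show ?thesis using True unfolding continuous_within by simp
  next
    case x0: False
    show ?thesis
    proof (cases "x = 1")
      case True
      have ev: "eventually (\<lambda>y. E y = N1 y) (at_left 1)"
        by (rule eventually_at_leftI[of 0 1]) (auto simp: N1_E)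
      have "(N1 \<longlongrightarrow> N1 1) (at_left 1)"
        using tendsto_cong[OF ev] E_lim1 by (simp add: N1_1)
      moreover have "at (1::real) within {0..1} = at_left 1" by (rule at_within_Icc_at_left) simp
      ultimately show ?thesis using True unfolding continuous_within by simp
    next
      case False
      then have xi: "x \<in> {0<..<1}" using x x0 by auto
      have "continuous_on {0<..<1} N1 = continuous_on {0<..<1} E" by (rule continuous_on_cong) (auto simp: N1_E)
      then have "continuous_on {0<..<1} N1" using E_cont by simp
      then have "isCont N1 x" using xi continuous_on_eq_continuous_at[of "{0<..<1}" N1] by simp
      then show ?thesis using continuous_at_imp_continuous_within by blast
    qed
  qed
qed


lemma N2_fuzzy: "fuzzy_negation N2" and N2_cont: "continuous_on {0..1} N2"
  and N2_strict: "\<forall>x\<in>{0..1}. \<forall>y\<in>{0..1}. x < y \<longrightarrow> N2 y < N2 x"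
proof -
  show s: "\<forall>x\<in>{0..1}. \<forall>y\<in>{0..1}. x < y \<longrightarrow> N2 y < N2 x"
  proof (intro ballI impI)
    fix x y :: real assume a: "x \<in> {0..1}" "y \<in> {0..1}" "x < y"
    have "N1 y < N1 x" "0 \<le> N1 y" using N1_strict a N1_range by auto
    thus "N2 y < N2 x" unfolding N2_def by (simp add: power_strict_mono)
  qed
  have r: "\<forall>x\<in>{0..1}. N2 x \<in> {0..1}"
    using N1_range unfolding N2_def by (auto simp: power_le_one)
  show "fuzzy_negation N2"
    unfolding fuzzy_negation_def using r s by (auto simp: N2_def N1_0 N1_1 order_le_less)
  show "continuous_on {0..1} N2" unfolding N2_def
    using N1_cont by (intro continuous_intros)
qed

lemma fpow_fpow: "fpow a (fpow b x) = fpow (a + b) x"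
  by (simp add: fpow_def powr_powr powr_add[symmetric] add.commute)

lemma fpow_0: "0 \<le> x \<Longrightarrow> fpow 0 x = x" by (simp add: fpow_def powr_one)

lemma c_uu: "2 powr (-1/2) = uu (-1)"
  by (simp add: uu_def powr_minus)

lemma U2_alt: "U2 x y = U1 (uu (-1)) (U1 x y)"
  unfolding U2_def c_uu by (rule refl)

lemma uu_range: "uu n \<in> {0..1}" using psi_pos psi_lt1 by (simp add: uu_psi less_imp_le)

lemma U1_swap: "x \<in> {0..1} \<Longrightarrow> c \<in> {0..1} \<Longrightarrow> w \<in> {0..1} \<Longrightarrow> U1 x (U1 c w) = U1 c (U1 x w)"
  by (metis U1_assoc U1_comm)

lemma U2_uninorm: "uninorm U2 (1/4)"
proof -
  let ?c = "uu (-1)"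
  have c: "?c \<in> {0..1}" by (rule uu_range)
  have r: "\<And>x y. x \<in> {0..1} \<Longrightarrow> y \<in> {0..1} \<Longrightarrow> U2 x y \<in> {0..1}"
    unfolding U2_alt using c U1_range by blast
  have cm: "\<And>x y. U2 x y = U2 y x" unfolding U2_alt using U1_comm by simp
  have as: "U2 x (U2 y z) = U2 (U2 x y) z" if a: "x \<in> {0..1}" "y \<in> {0..1}" "z \<in> {0..1}" for x y z
  proof -
    have yz: "U1 y z \<in> {0..1}" "U1 x y \<in> {0..1}" using a U1_range by auto
    have "U2 x (U2 y z) = U1 ?c (U1 ?c (U1 x (U1 y z)))"
      unfolding U2_alt using U1_swap[OF a(1) c yz(1)] by simp
    also have "\<dots> = U1 ?c (U1 ?c (U1 (U1 x y) z))" using U1_assoc a by simp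
    also have "\<dots> = U1 ?c (U1 ?c (U1 z (U1 x y)))" using U1_comm by simp
    also have "\<dots> = U2 (U2 x y) z"
      unfolding U2_alt using U1_swap[OF a(3) c yz(2)] U1_comm by simp
    finally show ?thesis .
  qed
  have mo: "U2 x y \<le> U2 x' y'" if a: "x \<in> {0..1}" "y \<in> {0..1}" "x' \<in> {0..1}" "y' \<in> {0..1}" "x \<le> x'" "y \<le> y'" for x y x' y'
    unfolding U2_alt using a c U1_range U1_mono by (meson order_refl)
  have ne: "U2 (1/4) x = x" if a: "x \<in> {0..1}" for x
  proof -
    have u: "uu 1 = 1/4" using psi_1 by (simp add: uu_psi)
    have e1: "U1 (1/4) x = fpow 1 x" using U1_uu[OF a, of 1] u by simp
    have "fpow 1 x \<in> {0..1}" using fpow_image a by blast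
    then have "U2 (1/4) x = fpow (-1) (fpow 1 x)"
      unfolding U2_alt e1 using U1_uu by simp
    also have "\<dots> = x" using a by (simp add: fpow_fpow fpow_0)
    finally show ?thesis .
  qed
  show ?thesis unfolding uninorm_def
    apply (intro conjI ballI impI)
    using r apply blast
    using cm apply blast
    using as apply blast
    using mo apply blast
    apply simp
    using ne by blast
qed

lemma U2_disj: "disjunctive U2"
  unfolding disjunctive_def U2_alt using uu_range by (simp add: U1_def)

lemma U2_N: "x \<in> {0..1} \<Longrightarrow> y \<in> {0..1} \<Longrightarrow> U2 (N2 x) y = U1 (N1 x) y"
proof -
  assume a: "x \<in> {0..1}" "y \<in> {0..1}"
  have n1: "N1 x \<in> {0..1}" using N1_range a by simp
  have n2: "N2 x \<in> {0..1}" using N2_fuzzy a unfolding fuzzy_negation_def by simp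
  have h1: "U1 (uu (-1)) (N2 x) = fpow (-1) (N2 x)" using U1_uu n2 by simp
  have h2: "N2 x = fpow 1 (N1 x)" using n1 by (simp add: N2_def fpow_def powr_numeral)
  have h3: "fpow (-1) (fpow 1 (N1 x)) = N1 x" using n1 by (simp add: fpow_fpow fpow_0)
  have e: "U1 (uu (-1)) (N2 x) = N1 x" using h1 h2 h3 by simp
  show ?thesis unfolding U2_alt using U1_assoc[OF uu_range n2 a(2)] e by simp
qed



theorem mainTheorem8:
  shows
    "(uninorm U1 (1/2) \<and> disjunctive U1) \<and>
     (\<forall>n::int.
        (\<forall>y\<in>{0..1}. U1 (uu n) y = fpow n y) \<and>
        continuous_on {0..1} (U1 (uu n)) \<and>
        strict_mono_on {0..1} (U1 (uu n)) \<and>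
        U1 (uu n) ` {0..1} = {0..1}) \<and>
     \<not> continuous_underlying U1 (1/2) \<and>
     (fuzzy_negation N1 \<and> continuous_on {0..1} N1 \<and>
        (\<forall>x\<in>{0..1}. \<forall>y\<in>{0..1}. x < y \<longrightarrow> N1 y < N1 x) \<and>
      fuzzy_negation N2 \<and> continuous_on {0..1} N2 \<and>
        (\<forall>x\<in>{0..1}. \<forall>y\<in>{0..1}. x < y \<longrightarrow> N2 y < N2 x) \<and>
      uninorm U2 (1/4) \<and> disjunctive U2 \<and>
      (\<forall>x\<in>{0..1}. \<forall>y\<in>{0..1}. U2 (N2 x) y = U1 (N1 x) y))"
proof -
  have b: "\<forall>n::int.
        (\<forall>y\<in>{0..1}. U1 (uu n) y = fpow n y) \<and>
        continuous_on {0..1} (U1 (uu n)) \<and>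
        strict_mono_on {0..1} (U1 (uu n)) \<and>
        U1 (uu n) ` {0..1} = {0..1}"
  proof
    fix n :: int
    have e: "\<forall>y\<in>{0..1}. U1 (uu n) y = fpow n y" using U1_uu by blast
    have c: "continuous_on {0..1} (U1 (uu n))"
      using fpow_cont[of n] continuous_on_cong[OF refl, of "{0..1}" "U1 (uu n)" "fpow n"] e by blast
    have s: "strict_mono_on {0..1} (U1 (uu n))"
      using fpow_smono[of n] e unfolding strict_mono_on_def by simp
    have i: "U1 (uu n) ` {0..1} = {0..1}"
      using fpow_image[of n] image_cong[OF refl, of "{0..1}" "U1 (uu n)" "fpow n"] e by simp
    show "(\<forall>y\<in>{0..1}. U1 (uu n) y = fpow n y) \<and> continuous_on {0..1} (U1 (uu n)) \<and>
        strict_mono_on {0..1} (U1 (uu n)) \<and> U1 (uu n) ` {0..1} = {0..1}"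
      using e c s i by blast
  qed
  have d1: "disjunctive U1" by (simp add: disjunctive_def U1_def)
  show ?thesis
    using U1_uninorm d1 b not_cont N1_fuzzy N1_cont N1_strict N2_fuzzy N2_cont N2_strict
      U2_uninorm U2_disj U2_N by blast
qed

end
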